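(* Let $\mathcal H$ be a finite-dimensional Hilbert space, let $P$ be an orthogonal projection on $\mathcal H$, and let $\mathcal E$ be a channel on $\mathcal L(\mathcal H)$ with operation elements $\{E_a\}$, i.e. $\mathcal E(\rho)=\sum_a E_a\rho E_a^\dagger$ with $\sum_a E_a^\dagger E_a={\bf 1}$. Let $\mathcal A$ be a subalgebra of $\mathcal L(P\mathcal H)$ closed under Hermitian conjugation, where operators on $P\mathcal H$ are regarded as operators $X$ on $\mathcal H$ with $X=PXP$ ($\mathcal A$ need not contain $P$). Then $\mathcal A$ is conserved by $\mathcal E$ for states in $P\mathcal H$, i.e. $$P\,\mathcal E^\dagger(X)\,P = PXP \quad\text{for all } X\in\mathcal A,$$ if and only if $[E_aP, X]=E_aPX-XE_aP=0$ for all operation elements $E_a$ and all $X\in\mathcal A$.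
   Context: $\mathcal L(\mathcal K)$ denotes the set of all linear operators on a Hilbert space $\mathcal K$. A channel is a completely positive trace-preserving linear map on $\mathcal L(\mathcal H)$; its dual (Heisenberg-picture) map is the unital completely positive map $\mathcal E^\dagger(X)=\sum_a E_a^\dagger X E_a$, characterized by $\mathrm{Tr}(\rho\,\mathcal E^\dagger(X))=\mathrm{Tr}(\mathcal E(\rho)X)$. *)

theory Defs
  imports "HOL-Analysis.Analysis"
begin

text \<open>Operators on the finite-dimensional Hilbert space H = complex^'n are
  represented as matrices of type complex^'n^'n (composition is ** ).\<close>

definition adj :: "complex^'n^'n \<Rightarrow> complex^'n^'n" where
  "adj A = (\<chi> i j. cnj (A $ j $ i))"

definition orth_projection :: "complex^'n^'n \<Rightarrow> bool" where
  "orth_projection P \<longleftrightarrow> P ** P = P \<and> adj P = P"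

definition kraus_channel :: "'a set \<Rightarrow> ('a \<Rightarrow> complex^'n^'n) \<Rightarrow> bool" where
  "kraus_channel I E \<longleftrightarrow> finite I \<and> (\<Sum>a\<in>I. adj (E a) ** E a) = mat 1"

definition dual_map :: "'a set \<Rightarrow> ('a \<Rightarrow> complex^'n^'n) \<Rightarrow> complex^'n^'n \<Rightarrow> complex^'n^'n" where
  "dual_map I E X = (\<Sum>a\<in>I. adj (E a) ** X ** E a)"

definition star_subalgebra_on :: "complex^'n^'n \<Rightarrow> (complex^'n^'n) set \<Rightarrow> bool" where
  "star_subalgebra_on P \<A> \<longleftrightarrow>
     (\<forall>X\<in>\<A>. P ** X ** P = X) \<and>
     0 \<in> \<A> \<and>
     (\<forall>X\<in>\<A>. \<forall>Y\<in>\<A>. X + Y \<in> \<A>) \<and>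
     (\<forall>c. \<forall>X\<in>\<A>. mat c ** X \<in> \<A>) \<and>
     (\<forall>X\<in>\<A>. \<forall>Y\<in>\<A>. X ** Y \<in> \<A>) \<and>
     (\<forall>X\<in>\<A>. adj X \<in> \<A>)"

end

theory Submission
  imports Defs
begin

type_synonym 'n cm = "complex^'n^'n"

lemma mm_add_r: "((A::'n::finite cm) + B) ** C = A ** C + B ** C"
  by (simp add: matrix_matrix_mult_def vec_eq_iff sum.distrib algebra_simps)
lemma mm_sub_r: "((A::'n::finite cm) - B) ** C = A ** C - B ** C"
  by (simp add: matrix_matrix_mult_def vec_eq_iff sum_subtractf algebra_simps)
lemma mm_sub_l: "(A::'n::finite cm) ** (B - C) = A ** B - A ** C"
  by (simp add: matrix_matrix_mult_def vec_eq_iff sum_subtractf algebra_simps)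
lemma mm_sum_r: "finite I \<Longrightarrow> (\<Sum>a\<in>I. (f a :: 'n::finite cm)) ** (C::'n::finite cm) = (\<Sum>a\<in>I. f a ** C)"
  by (induction I rule: finite_induct) (auto simp: mm_add_r)
lemma mm_sum_l: "finite I \<Longrightarrow> (C::'n::finite cm) ** (\<Sum>a\<in>I. (f a :: 'n::finite cm)) = (\<Sum>a\<in>I. C ** f a)"
  by (induction I rule: finite_induct) (auto simp: matrix_add_ldistrib)

lemma adj_mult: "adj ((A::'n::finite cm) ** B) = adj B ** adj A"
  by (simp add: adj_def matrix_matrix_mult_def vec_eq_iff mult.commute)
lemma adj_sub: "adj ((A::'n::finite cm) - B) = adj A - adj B"
  by (simp add: adj_def vec_eq_iff)
lemma adj_adj: "adj (adj (A::'n::finite cm)) = A"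
  by (simp add: adj_def vec_eq_iff)

lemma diag_adj_mult: "(adj (D::'n::finite cm) ** D) $ j $ j = (\<Sum>k\<in>UNIV. complex_of_real ((cmod (D $ k $ j))\<^sup>2))"
  unfolding adj_def matrix_matrix_mult_def
  apply simp
  apply (intro sum.cong refl)
  by (metis complex_norm_square mult.commute of_real_power)

lemma pt: "adj (Q ** X - X ** Q) ** (Q ** X - X ** (Q::'n::finite cm)) = adj X ** (adj Q ** mat 1 ** Q) ** X - adj X ** (adj Q ** X ** Q)
          - (adj Q ** adj X ** Q) ** X + adj Q ** (adj X ** X) ** Q"
  by (simp add: adj_sub adj_mult mm_sub_l mm_sub_r matrix_mul_assoc)

lemma sum_adj_zero:
  assumes "finite I" "(\<Sum>a\<in>I. adj (D a) ** (D a :: 'n::finite cm)) = 0" "a \<in> I"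
  shows "D a = 0"
proof -
  have "D a $ k $ j = 0" for k j
  proof -
    have "(\<Sum>a\<in>I. adj (D a) ** (D a :: 'n::finite cm)) $ j $ j = 0"
      using assms(2) by simp
    hence "(\<Sum>b\<in>I. (adj (D b) ** D b) $ j $ j) = 0"
      by (simp only: sum_component)
    hence "complex_of_real (\<Sum>b\<in>I. \<Sum>k\<in>UNIV. (cmod (D b $ k $ j))\<^sup>2) = 0"
      by (simp only: diag_adj_mult of_real_sum)
    hence s0: "(\<Sum>b\<in>I. \<Sum>k\<in>UNIV. (cmod (D b $ k $ j))\<^sup>2) = 0"
      by (simp only: of_real_eq_0_iff)
    have "(\<Sum>k\<in>UNIV. (cmod (D a $ k $ j))\<^sup>2) = 0"
      using s0 assms(1,3) sum_nonneg_eq_0_iff[of I "\<lambda>b. \<Sum>k\<in>UNIV. (cmod (D b $ k $ j))\<^sup>2"]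
      by (simp add: sum_nonneg)
    hence "(cmod (D a $ k $ j))\<^sup>2 = 0"
      using sum_nonneg_eq_0_iff[of UNIV "\<lambda>k. (cmod (D a $ k $ j))\<^sup>2"] by simp
    thus ?thesis by simp
  qed
  thus ?thesis by (simp add: vec_eq_iff)
qed
theorem theorem1:
  fixes P :: "complex^'n^'n"
    and I :: "'a set" and E :: "'a \<Rightarrow> complex^'n^'n"
    and \<A> :: "(complex^'n^'n) set"
  assumes "orth_projection P"
    and "kraus_channel I E"
    and "star_subalgebra_on P \<A>"
  shows "(\<forall>X\<in>\<A>. P ** dual_map I E X ** P = P ** X ** P) \<longleftrightarrow>
         (\<forall>a\<in>I. \<forall>X\<in>\<A>. E a ** P ** X - X ** (E a ** P) = 0)"
proof -
  have PP: "P ** P = P" and aP: "adj P = P" using assms(1) by (auto simp: orth_projection_def)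
  have fin: "finite I" and sumE: "(\<Sum>a\<in>I. adj (E a) ** E a) = mat 1"
    using assms(2) by (auto simp: kraus_channel_def)
  have XP: "P ** X ** P = X" if "X \<in> \<A>" for X using assms(3) that by (auto simp: star_subalgebra_on_def)
  have adjA: "adj X \<in> \<A>" if "X \<in> \<A>" for X using assms(3) that by (auto simp: star_subalgebra_on_def)
  have mulA: "X ** Y \<in> \<A>" if "X \<in> \<A>" "Y \<in> \<A>" for X Y using assms(3) that by (auto simp: star_subalgebra_on_def)
  have PX: "P ** X = X" if "X \<in> \<A>" for X
    by (metis XP PP matrix_mul_assoc that)
  have XP': "X ** P = X" if "X \<in> \<A>" for X
    by (metis XP PP matrix_mul_assoc that)
  define Q where "Q a = E a ** P" for a
  define S where "S M = (\<Sum>a\<in>I. adj (Q a) ** M ** Q a)" for M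
  have S_eq: "S M = P ** dual_map I E M ** P" for M
  proof -
    have "S M = (\<Sum>a\<in>I. P ** (adj (E a) ** M ** E a) ** P)"
      unfolding S_def Q_def by (simp add: adj_mult aP matrix_mul_assoc)
    also have "\<dots> = P ** dual_map I E M ** P"
      unfolding dual_map_def by (simp add: mm_sum_l mm_sum_r fin)
    finally show ?thesis .
  qed
  have S1: "S (mat 1) = P"
    using S_eq[of "mat 1"] by (simp add: dual_map_def sumE PP)
  show ?thesis
  proof
    assume H: "\<forall>X\<in>\<A>. P ** dual_map I E X ** P = P ** X ** P"
    have HS: "S X = X" if "X \<in> \<A>" for X using H that S_eq XP by auto
    show "\<forall>a\<in>I. \<forall>X\<in>\<A>. E a ** P ** X - X ** (E a ** P) = 0"
    proof (intro ballI)
      fix a X assume a: "a \<in> I" and X: "X \<in> \<A>"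
      define D where "D b = Q b ** X - X ** Q b" for b
      have pt: "adj (D b) ** D b = adj X ** (adj (Q b) ** mat 1 ** Q b) ** X - adj X ** (adj (Q b) ** X ** Q b)
          - (adj (Q b) ** adj X ** Q b) ** X + adj (Q b) ** (adj X ** X) ** Q b" for b
        unfolding D_def by (rule pt)
      have "(\<Sum>b\<in>I. adj (D b) ** D b) = adj X ** S (mat 1) ** X - adj X ** S X - S (adj X) ** X + S (adj X ** X)"
        unfolding pt S_def by (simp add: sum.distrib sum_subtractf mm_sum_l mm_sum_r fin)
      also have "\<dots> = 0"
        using X by (simp add: S1 HS adjA mulA PX flip: matrix_mul_assoc)
      finally have "D a = 0" by (rule sum_adj_zero[OF fin _ a])
      thus "E a ** P ** X - X ** (E a ** P) = 0" by (simp add: D_def Q_def)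
    qed
  next
    assume C: "\<forall>a\<in>I. \<forall>X\<in>\<A>. E a ** P ** X - X ** (E a ** P) = 0"
    show "\<forall>X\<in>\<A>. P ** dual_map I E X ** P = P ** X ** P"
    proof
      fix X assume X: "X \<in> \<A>"
      have c: "X ** Q a = Q a ** X" if "a \<in> I" for a using C that X by (simp add: Q_def)
      have "S X = (\<Sum>a\<in>I. adj (Q a) ** Q a ** X)"
        unfolding S_def by (intro sum.cong refl) (simp add: c flip: matrix_mul_assoc)
      also have "\<dots> = S (mat 1) ** X" unfolding S_def by (simp add: mm_sum_r fin)
      also have "\<dots> = X" using S1 PX X by simp
      finally show "P ** dual_map I E X ** P = P ** X ** P" using S_eq XP X by simp
    qed
  qed
qed

end
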